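(* Let $p(\cdot)\in\mathcal{P}^{\log}_{0}(\mathbb{R}^{3})$ with $2\leq p^{-}\leq p(\cdot)\leq p^{+}\leq 6$, and $1\leq\rho\leq\infty$. Then there exists a positive constant $C$ such that for any $u_{0}\in F\dot{B}^{1-\frac{3}{p(\cdot)}}_{p(\cdot),1}(\mathbb{R}^{3})$, \[ \|e^{t\Delta}u_{0}\|_{\mathcal{Y}_{t}}\leq C\|u_{0}\|_{F\dot{B}^{1-\frac{3}{p(\cdot)}}_{p(\cdot),1}}. \]
   Context: $e^{t\Delta}$ is the Fourier multiplier $e^{-t|\xi|^2}$. Fourier transform: $\widehat f(\xi)=(2\pi)^{-3/2}\int f(x)e^{-ix\cdot\xi}dx$. Let $\chi$ be a smooth radial non-increasing function supported in $B(0,\frac43)$ with $\chi\equiv1$ on $B(0,\frac34)$; $\varphi(\xi)=\chi(\xi/2)-\chi(\xi)$, $\varphi_j(\xi)=\varphi(2^{-j}\xi)$, $S_jf=\mathcal{F}^{-1}(\chi(2^{-j}\cdot)\widehat f)$; $\mathcal{S}'_h$ is the set of tempered distributions with $S_jf\to0$ as $j\to-\infty$. Constant exponents: $\|f\|_{F\dot B^s_{p,1}}=\sum_j2^{js}\|\varphi_j\widehat f\|_{L^p}$ and $\|f\|_{\mathcal{L}^\lambda_t(F\dot B^s_{p,1})}=\sum_j2^{js}\|\varphi_j\widehat f\|_{L^\lambda(0,\infty;L^p_\xi)}$. Variable exponents: $\mathcal{P}_0$ is the set of measurable $p:\mathbb{R}^3\to[1,\infty)$ with $1<p^-:=\operatorname{ess\,inf}p$,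 $p^+:=\operatorname{ess\,sup}p<\infty$; $\|f\|_{L^{p(\cdot)}}=\inf\{\lambda>0:\int|f/\lambda|^{p(x)}dx\le1\}$; $\mathcal{P}_0^{\log}$ is the set of $p\in\mathcal{P}_0$ such that $1/p_\infty=\lim_{|x|\to\infty}1/p(x)$ exists and for some $C$, $|1/p(x)-1/p(y)|\le C/\log(e+1/|x-y|)$ and $|1/p(x)-1/p_\infty|\le C/\log(e+|x|)$. For a function $s(\cdot)$: $\|f\|_{F\dot B^{s(\cdot)}_{p(\cdot),1}}=\sum_j\|2^{js(\cdot)}\varphi_j\widehat f\|_{L^{p(\cdot)}}$ and $\|f\|_{\mathcal{L}^\rho_t(F\dot B^{s(\cdot)}_{p(\cdot),1})}=\sum_j\|2^{js(\cdot)}\varphi_j\widehat f\|_{L^\rho(0,\infty;L^{p(\cdot)}_\xi)}$, with $2^{js(\cdot)}$ the function $\xi\mapsto 2^{js(\xi)}$. The space $\mathcal{Y}_t=\mathcal{L}^{\rho}(0,\infty;F\dot{B}^{1-\frac{3}{p(\cdot)}+\frac{2}{\rho}}_{p(\cdot),1})\cap\mathcal{L}^{1}(0,\infty;F\dot{B}^{\frac{3}{2}}_{2,1})\cap\mathcal{L}^{\infty}(0,\infty;F\dot{B}^{-\frac{1}{2}}_{2,1})$ with norm $\|u\|_{\mathcal{Y}_t}=\max\{\|u\|_{\mathcal{L}^\rho_t(F\dot B^{1-\frac{3}{p(\cdot)}+\frac2\rho}_{p(\cdot),1})},\|u\|_{\mathcal{L}^1_t(F\dot B^{\frac32}_{2,1})},\|u\|_{\mathcal{L}^\infty_t(F\dot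 B^{-\frac12}_{2,1})}\}$. *)

theory Defs
  imports "HOL-Analysis.Analysis"
begin

text \<open>A tempered distribution u0 enters every norm only through its Fourier
  transform; we therefore work directly with uhat = Fourier transform of u0,
  a function real^3 to complex.\<close>

coinductive smooth3 :: "(real^3 \<Rightarrow> real) \<Rightarrow> bool" where
  "(\<forall>x. f differentiable (at x)) \<Longrightarrow>
   (\<forall>i. smooth3 (\<lambda>x. frechet_derivative f (at x) (axis i 1))) \<Longrightarrow> smooth3 f"

definition admissible_chi :: "(real^3 \<Rightarrow> real) \<Rightarrow> bool" where
  "admissible_chi chi \<longleftrightarrow> smooth3 chi
     \<and> (\<forall>x y. norm x = norm y \<longrightarrow> chi x = chi y)
     \<and> (\<forall>x y. norm x \<le> norm y \<longrightarrow> chi y \<le> chi x)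
     \<and> (\<forall>x. 4/3 \<le> norm x \<longrightarrow> chi x = 0)
     \<and> (\<forall>x. norm x \<le> 3/4 \<longrightarrow> chi x = 1)"

definition phi :: "(real^3 \<Rightarrow> real) \<Rightarrow> real^3 \<Rightarrow> real" where
  "phi chi xi = chi ((1/2) *\<^sub>R xi) - chi xi"

definition phi_j :: "(real^3 \<Rightarrow> real) \<Rightarrow> int \<Rightarrow> real^3 \<Rightarrow> real" where
  "phi_j chi j xi = phi chi ((2 powr (- real_of_int j)) *\<^sub>R xi)"

definition epowr :: "ennreal \<Rightarrow> real \<Rightarrow> ennreal" where
  "epowr x r = (if x = \<infinity> then \<infinity> else ennreal (enn2real x powr r))"

definition P0_log :: "(real^3 \<Rightarrow> real) \<Rightarrow> bool" where
  "P0_log p \<longleftrightarrow> p \<in> borel_measurable lborel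
     \<and> (\<forall>x. 1 \<le> p x)
     \<and> 1 < (SUP c\<in>{c. AE x in lborel. c \<le> p x}. c)
     \<and> (\<exists>c. AE x in lborel. p x \<le> c)
     \<and> (\<exists>pinf::real. ((\<lambda>x. 1 / p x) \<longlongrightarrow> 1 / pinf) (at_infinity)
          \<and> (\<exists>C. (\<forall>x y. \<bar>1 / p x - 1 / p y\<bar> \<le> C / ln (exp 1 + 1 / norm (x - y)))
                \<and> (\<forall>x. \<bar>1 / p x - 1 / pinf\<bar> \<le> C / ln (exp 1 + norm x))))"

definition vlp_norm :: "(real^3 \<Rightarrow> real) \<Rightarrow> (real^3 \<Rightarrow> complex) \<Rightarrow> ennreal" where
  "vlp_norm p f = Inf {ennreal lam | lam. lam > 0 \<and>
      (\<integral>\<^sup>+ x. ennreal ((norm (f x) / lam) powr p x) \<partial>lborel) \<le> 1}"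

definition lp_norm :: "real \<Rightarrow> (real^3 \<Rightarrow> complex) \<Rightarrow> ennreal" where
  "lp_norm q f = epowr (\<integral>\<^sup>+ x. ennreal (norm (f x) powr q) \<partial>lborel) (1 / q)"

definition time_norm :: "ennreal \<Rightarrow> (real \<Rightarrow> ennreal) \<Rightarrow> ennreal" where
  "time_norm rho N =
     (if rho = \<infinity> then Inf {c. AE t in lborel. t > 0 \<longrightarrow> N t \<le> c}
      else epowr (\<integral>\<^sup>+ t. indicator {0<..} t * epowr (N t) (enn2real rho) \<partial>lborel)
                 (1 / enn2real rho))"

definition FB_var_norm :: "(real^3 \<Rightarrow> real) \<Rightarrow> (real^3 \<Rightarrow> real) \<Rightarrow> (real^3 \<Rightarrow> real)
      \<Rightarrow> (real^3 \<Rightarrow> complex) \<Rightarrow> ennreal" where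
  "FB_var_norm chi s p uhat = (\<Sum>\<^sub>\<infinity>j\<in>(UNIV::int set).
      vlp_norm p (\<lambda>xi. complex_of_real (2 powr (real_of_int j * s xi) * phi_j chi j xi) * uhat xi))"

definition LFB_var_norm :: "(real^3 \<Rightarrow> real) \<Rightarrow> ennreal \<Rightarrow> (real^3 \<Rightarrow> real) \<Rightarrow> (real^3 \<Rightarrow> real)
      \<Rightarrow> (real \<Rightarrow> real^3 \<Rightarrow> complex) \<Rightarrow> ennreal" where
  "LFB_var_norm chi rho s p F = (\<Sum>\<^sub>\<infinity>j\<in>(UNIV::int set).
      time_norm rho (\<lambda>t. vlp_norm p
         (\<lambda>xi. complex_of_real (2 powr (real_of_int j * s xi) * phi_j chi j xi) * F t xi)))"

definition LFB_norm :: "(real^3 \<Rightarrow> real) \<Rightarrow> ennreal \<Rightarrow> real \<Rightarrow> real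
      \<Rightarrow> (real \<Rightarrow> real^3 \<Rightarrow> complex) \<Rightarrow> ennreal" where
  "LFB_norm chi lam s q F = (\<Sum>\<^sub>\<infinity>j\<in>(UNIV::int set).
      ennreal (2 powr (real_of_int j * s)) *
      time_norm lam (\<lambda>t. lp_norm q (\<lambda>xi. complex_of_real (phi_j chi j xi) * F t xi)))"

text \<open>Fourier transform of the heat flow e^{t Delta} u0.\<close>
definition heat_hat :: "(real^3 \<Rightarrow> complex) \<Rightarrow> real \<Rightarrow> real^3 \<Rightarrow> complex" where
  "heat_hat uhat t xi = complex_of_real (exp (- t * (norm xi)\<^sup>2)) * uhat xi"

definition Y_norm :: "(real^3 \<Rightarrow> real) \<Rightarrow> ennreal \<Rightarrow> (real^3 \<Rightarrow> real)
      \<Rightarrow> (real \<Rightarrow> real^3 \<Rightarrow> complex) \<Rightarrow> ennreal" where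
  "Y_norm chi rho p F = max (LFB_var_norm chi rho
        (\<lambda>xi. 1 - 3 / p xi + (if rho = \<infinity> then 0 else 2 / enn2real rho)) p F)
      (max (LFB_norm chi 1 (3/2) 2 F) (LFB_norm chi \<infinity> (-1/2) 2 F))"

end

theory Submission
  imports Defs "HOL-Probability.Distributions"
begin

lemma chi_facts:
  assumes "admissible_chi chi"
  shows "\<And>x. 4/3 \<le> norm x \<Longrightarrow> chi x = 0" "\<And>x. norm x \<le> 3/4 \<Longrightarrow> chi x = 1"
    "continuous_on UNIV chi"
proof -
  have H: "smooth3 chi \<and> (\<forall>x. 4/3 \<le> norm x \<longrightarrow> chi x = 0) \<and> (\<forall>x. norm x \<le> 3/4 \<longrightarrow> chi x = 1)"
    using assms unfolding admissible_chi_def by (elim conjE) (intro conjI)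
  show "\<And>x. 4/3 \<le> norm x \<Longrightarrow> chi x = 0" "\<And>x. norm x \<le> 3/4 \<Longrightarrow> chi x = 1"
    using H by simp_all
  have "smooth3 chi" using H by simp
  then have "\<forall>x. chi differentiable (at x)" by (cases rule: smooth3.cases) auto
  then show "continuous_on UNIV chi"
    by (meson differentiable_imp_continuous_within continuous_at_imp_continuous_on)
qed

lemma chi_meas:
  assumes "admissible_chi chi"
  shows "chi \<in> borel_measurable borel"
  using chi_facts(3)[OF assms] by (rule borel_measurable_continuous_onI)

lemma phi_j_meas:
  assumes "admissible_chi chi"
  shows "phi_j chi j \<in> borel_measurable borel"
proof -
  have [measurable]: "chi \<in> borel_measurable borel" by (rule chi_meas[OF assms])
  show ?thesis unfolding phi_j_def[abs_def] phi_def by measurable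
qed

lemma phi_j_supp:
  assumes "admissible_chi chi" "phi_j chi j xi \<noteq> 0"
  shows "3/4 * 2 powr real_of_int j < norm xi" "norm xi < 8/3 * 2 powr real_of_int j"
proof -
  let ?c = "2 powr (- real_of_int j)"
  have cpos: "?c > 0" by simp
  have inv: "?c * 2 powr real_of_int j = 1" by (simp add: powr_minus)
  have n1: "norm (?c *\<^sub>R xi) = ?c * norm xi" by simp
  have n2: "norm ((1/2) *\<^sub>R (?c *\<^sub>R xi)) = ?c * norm xi / 2" by simp
  have pj: "phi_j chi j xi = chi ((1/2) *\<^sub>R (?c *\<^sub>R xi)) - chi (?c *\<^sub>R xi)"
    by (simp add: phi_j_def phi_def)
  show "3/4 * 2 powr real_of_int j < norm xi"
  proof (rule ccontr)
    assume "\<not> ?thesis"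
    then have "norm xi \<le> 3/4 * 2 powr real_of_int j" by simp
    then have "?c * norm xi \<le> ?c * (3/4 * 2 powr real_of_int j)"
      by (intro mult_left_mono) auto
    also have "\<dots> = 3/4" using inv by (simp add: algebra_simps)
    finally have h: "?c * norm xi \<le> 3/4" .
    have "0 \<le> ?c * norm xi" by simp
    then have "?c * norm xi / 2 \<le> 3/4" using h by linarith
    then show False using assms(2) pj h n1 n2 chi_facts(2)[OF assms(1)] by simp
  qed
  show "norm xi < 8/3 * 2 powr real_of_int j"
  proof (rule ccontr)
    assume "\<not> ?thesis"
    then have "norm xi \<ge> 8/3 * 2 powr real_of_int j" by simp
    then have "?c * (8/3 * 2 powr real_of_int j) \<le> ?c * norm xi"
      by (intro mult_left_mono) auto
    moreover have "?c * (8/3 * 2 powr real_of_int j) = 8/3" using inv by (simp add: algebra_simps)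
    ultimately have h: "8/3 \<le> ?c * norm xi" by linarith
    then have "?c * norm xi / 2 \<ge> 4/3" by simp
    moreover have "?c * norm xi \<ge> 4/3" using h by simp
    ultimately show False using assms(2) pj n1 n2 chi_facts(1)[OF assms(1)] by simp
  qed
qed

lemma young_pt:
  fixes h p J :: real
  assumes "0 \<le> h" "2 \<le> p"
  shows "h^2 * 2 powr (-3*J*(1-2/p)) \<le> h powr p + 2 powr (-3*J)"
proof (cases "h = 0")
  case True then show ?thesis by simp
next
  case False
  then have hp: "h > 0" using assms by simp
  define a where "a = ln h"
  have h: "h = exp a" using hp a_def by simp
  define L where "L = ln (2::real)"
  have L: "L > 0" unfolding L_def by simp
  have e1: "h^2 * 2 powr (-3*J*(1-2/p)) = exp (2*a - 3*J*(1-2/p)*L)"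
    by (simp add: h powr_def L_def exp_add[symmetric] power2_eq_square exp_diff algebra_simps)
  have e2: "h powr p = exp (p*a)" by (simp add: h powr_def)
  have e3: "2 powr (-3*J) = exp (-3*J*L)" by (simp add: powr_def L_def)
  show ?thesis
  proof (cases "2*a - 3*J*(1-2/p)*L \<le> p*a")
    case True
    then have "exp (2*a - 3*J*(1-2/p)*L) \<le> exp (p*a)" by simp
    then show ?thesis unfolding e1 e2 e3 by (smt (verit) exp_gt_zero)
  next
    case False
    then have p2: "p > 2" using assms by (cases "p = 2") (auto simp: algebra_simps)
    have "(p - 2) * a < - 3*J*(1-2/p)*L" using False by (simp add: algebra_simps)
    also have "- 3*J*(1-2/p)*L = (p-2) * (-3*J*L/p)" using p2 by (simp add: field_simps)
    finally have "(p - 2) * a < (p-2) * (-3*J*L/p)" .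
    then have "a < -3*J*L/p" using p2 by (metis diff_gt_0_iff_gt mult_less_cancel_left_pos)
    then have "2*a < 2*(-3*J*L/p)" by simp
    then have "2*a - 3*J*(1-2/p)*L < -3*J*L" using p2 by (simp add: field_simps)
    then have "exp (2*a - 3*J*(1-2/p)*L) \<le> exp (-3*J*L)" by simp
    then show ?thesis unfolding e1 e2 e3 by (smt (verit) exp_gt_zero)
  qed
qed


lemma vlp_le:
  assumes "lam > 0" "(\<integral>\<^sup>+x. ennreal ((norm (f x)/lam) powr p x) \<partial>lborel) \<le> 1"
  shows "vlp_norm p f \<le> ennreal lam"
  unfolding vlp_norm_def by (rule Inf_lower) (use assms in auto)

lemma vlp_mem:
  assumes "vlp_norm p f < ennreal lam" "lam > 0" "\<forall>x. 0 \<le> p x"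
  shows "(\<integral>\<^sup>+x. ennreal ((norm (f x)/lam) powr p x) \<partial>lborel) \<le> 1"
proof -
  from assms(1) obtain l where l: "l > 0" "(\<integral>\<^sup>+x. ennreal ((norm (f x)/l) powr p x) \<partial>lborel) \<le> 1"
     "ennreal l < ennreal lam"
    unfolding vlp_norm_def Inf_less_iff by auto
  then have "l < lam" by (simp add: ennreal_less_iff)
  have "(\<integral>\<^sup>+x. ennreal ((norm (f x)/lam) powr p x) \<partial>lborel) \<le> (\<integral>\<^sup>+x. ennreal ((norm (f x)/l) powr p x) \<partial>lborel)"
  proof (intro nn_integral_mono ennreal_leI powr_mono2)
    fix x
    show "0 \<le> p x" using assms(3) by auto
    show "0 \<le> norm (f x) / lam" using assms(2) by simp
    show "norm (f x) / lam \<le> norm (f x) / l" using l \<open>l < lam\<close>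
      by (intro divide_left_mono) auto
  qed
  then show ?thesis using l by simp
qed

lemma eps_le:
  fixes X :: ennreal
  assumes "0 \<le> K" "0 \<le> a" "\<And>l. a < l \<Longrightarrow> X \<le> ennreal (K*l)"
  shows "X \<le> ennreal (K*a)"
proof (rule dense_ge)
  fix y assume y: "ennreal (K*a) < y"
  show "X \<le> y"
  proof (cases "K = 0")
    case True then show ?thesis using assms(3)[of "a+1"] y by auto
  next
    case False
    then have Kp: "K > 0" using assms by simp
    show ?thesis
    proof (cases y)
      case (real y')
      have "0 \<le> K*a" using assms by simp
      then have "K*a < y'" using y real by (simp add: ennreal_less_iff)
      then have "a < y'/K" using Kp by (simp add: field_simps)
      then have "X \<le> ennreal (K*(y'/K))" by (rule assms(3))
      then show ?thesis using Kp real by simp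
    next
      case top then show ?thesis by simp
    qed
  qed
qed

lemma epowr_le:
  assumes "X \<le> ennreal y" "0 \<le> y" "0 \<le> r"
  shows "epowr X r \<le> ennreal (y powr r)"
proof (cases X)
  case (real x)
  then have "x \<le> y" using assms by simp
  then show ?thesis using real assms unfolding epowr_def
    by (auto intro!: ennreal_leI powr_mono2)
next
  case top then show ?thesis using assms by (simp add: top_unique)
qed

lemma time_inf:
  assumes "\<And>t. 0 < t \<Longrightarrow> N t \<le> ennreal A"
  shows "time_norm \<infinity> N \<le> ennreal A"
proof -
  have "ennreal A \<in> {c. AE t in lborel. t > 0 \<longrightarrow> N t \<le> c}"
    using assms by (auto intro!: AE_I2)
  then have "Inf {c. AE t in lborel. t > 0 \<longrightarrow> N t \<le> c} \<le> ennreal A"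
    by (rule Inf_lower)
  then show ?thesis unfolding time_norm_def by simp
qed

lemma exp_dens_int:
  assumes "0 < l"
  shows "(\<integral>\<^sup>+x. ennreal (exponential_density l x) \<partial>lborel) = 1"
proof -
  interpret prob_space "density lborel (exponential_density l)"
    by (rule prob_space_exponential_density[OF assms])
  have "emeasure (density lborel (exponential_density l)) UNIV = 1"
    using emeasure_space_1 by simp
  then show ?thesis by (simp add: emeasure_density)
qed

lemma time_fin:
  assumes "1 \<le> r" "0 < b" "0 \<le> A" "\<And>t. 0 < t \<Longrightarrow> N t \<le> ennreal (A * exp (-b*t))"
  shows "time_norm (ennreal r) N \<le> ennreal (A / (r*b) powr (1/r))"
proof -
  have rb: "r*b > 0" using assms by simp
  have "(\<integral>\<^sup>+t. indicator {0<..} t * epowr (N t) r \<partial>lborel)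
      \<le> (\<integral>\<^sup>+t. ennreal (A powr r / (r*b)) * ennreal (exponential_density (r*b) t) \<partial>lborel)"
  proof (intro nn_integral_mono)
    fix t :: real
    show "indicator {0<..} t * epowr (N t) r \<le> ennreal (A powr r / (r*b)) * ennreal (exponential_density (r*b) t)"
    proof (cases "0 < t")
      case True
      have "epowr (N t) r \<le> ennreal ((A * exp (-b*t)) powr r)"
        using assms True by (intro epowr_le) auto
      also have "(A * exp (-b*t)) powr r = A powr r * exp (- t * (r*b))"
        using assms by (simp add: powr_mult exp_powr_real algebra_simps)
      also have "\<dots> = A powr r / (r*b) * exponential_density (r*b) t"
        using True rb assms by (simp add: exponential_density_def field_simps)
      finally have le: "epowr (N t) r \<le> ennreal (A powr r / (r*b) * exponential_density (r*b) t)" .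
      have eq: "ennreal (A powr r / (r*b) * exponential_density (r*b) t) = ennreal (A powr r / (r*b)) * ennreal (exponential_density (r*b) t)"
        by (rule ennreal_mult) (use rb exponential_density_nonneg[OF rb] in auto)
      show ?thesis using True le eq by simp
    next
      case False then show ?thesis by simp
    qed
  qed
  also have "\<dots> = ennreal (A powr r / (r*b))"
    using exp_dens_int[OF rb] by (simp add: nn_integral_cmult)
  finally have I: "(\<integral>\<^sup>+t. indicator {0<..} t * epowr (N t) r \<partial>lborel) \<le> ennreal (A powr r / (r*b))" .
  have "time_norm (ennreal r) N = epowr (\<integral>\<^sup>+t. indicator {0<..} t * epowr (N t) r \<partial>lborel) (1/r)"
    unfolding time_norm_def using assms by simp
  also have "\<dots> \<le> ennreal ((A powr r / (r*b)) powr (1/r))"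
    using I assms rb by (intro epowr_le) auto
  also have "(A powr r / (r*b)) powr (1/r) = A / (r*b) powr (1/r)"
    using assms rb by (simp add: powr_divide powr_powr)
  finally show ?thesis .
qed

definition gfun :: "(real^3 \<Rightarrow> real) \<Rightarrow> (real^3 \<Rightarrow> real) \<Rightarrow> (real^3 \<Rightarrow> complex) \<Rightarrow> int \<Rightarrow> real^3 \<Rightarrow> complex" where
  "gfun chi p uhat j xi = complex_of_real (2 powr (real_of_int j * (1 - 3 / p xi)) * phi_j chi j xi) * uhat xi"

definition Kc :: real where "Kc = 1 + unit_ball_vol 3 * (8/3)^3"

lemma Kc_pos: "Kc > 0" unfolding Kc_def by (simp add: add_pos_nonneg)

lemma pt_bound:
  fixes e l :: real and z :: complex
  assumes chi: "admissible_chi chi" and px: "2 \<le> p x" and l: "0 < l" and e: "0 \<le> e"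
    and f: "norm z \<le> e * norm (complex_of_real (phi_j chi j x) * uhat x)"
  shows "norm z powr 2 \<le> e^2 * 2 powr real_of_int j * l^2 *
     ((norm (gfun chi p uhat j x) / l) powr p x
      + 2 powr (-3 * real_of_int j) * indicator (ball 0 (8/3 * 2 powr real_of_int j)) x)"
proof (cases "phi_j chi j x = 0")
  case True
  then have "z = 0" using f by simp
  then show ?thesis using e l by (simp add: indicator_def)
next
  case False
  let ?J = "real_of_int j"
  let ?h = "norm (gfun chi p uhat j x) / l"
  let ?m = "norm (complex_of_real (phi_j chi j x) * uhat x)"
  have inb: "x \<in> ball 0 (8/3 * 2 powr ?J)" using phi_j_supp(2)[OF chi False] by simp
  have hnn: "0 \<le> ?h" using l by simp
  have ng: "norm (gfun chi p uhat j x) = 2 powr (?J * (1 - 3 / p x)) * ?m"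
    unfolding gfun_def by (simp add: norm_mult abs_mult)
  have inv: "2 powr (?J * (1 - 3 / p x)) * 2 powr (- (?J * (1 - 3 / p x))) = 1"
    by (simp add: powr_add[symmetric])
  have "l * ?h * 2 powr (- (?J * (1 - 3 / p x))) = (2 powr (?J * (1 - 3 / p x)) * 2 powr (- (?J * (1 - 3 / p x)))) * ?m"
    using l ng by simp
  then have m: "?m = l * ?h * 2 powr (- (?J * (1 - 3 / p x)))"
    using inv by simp
  have "norm z powr 2 = (norm z)^2" by (simp add: powr_numeral)
  also have "\<dots> \<le> (e * ?m)^2" using f by (intro power_mono) auto
  also have "(e * ?m)^2 = e^2 * l^2 * ?h^2 * (2 powr (- (?J * (1 - 3 / p x))))^2"
    unfolding m by (simp only: power_mult_distrib mult.assoc)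
  also have "(2 powr (- (?J * (1 - 3 / p x))))^2 = 2 powr ?J * 2 powr (-3 * ?J * (1 - 2 / p x))"
  proof -
    have ex: "- (?J * (1 - 3 / p x)) + - (?J * (1 - 3 / p x)) = ?J + (-3 * ?J * (1 - 2 / p x))"
      using px by (simp add: field_simps)
    show ?thesis by (simp only: power2_eq_square powr_add[symmetric] ex)
  qed
  also have "e^2 * l^2 * ?h^2 * (2 powr ?J * 2 powr (-3 * ?J * (1 - 2 / p x)))
     = e^2 * 2 powr ?J * l^2 * (?h^2 * 2 powr (-3 * ?J * (1 - 2 / p x)))" by (simp add: algebra_simps)
  also have "\<dots> \<le> e^2 * 2 powr ?J * l^2 * (?h powr p x + 2 powr (-3 * ?J))"
    by (intro mult_left_mono young_pt hnn px) auto
  finally show ?thesis using inb by simp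
qed

lemma L2_key:
  fixes f :: "real^3 \<Rightarrow> complex"
  assumes chi: "admissible_chi chi" and pm: "p \<in> borel_measurable borel" and um: "uhat \<in> borel_measurable borel"
    and p2: "AE x in lborel. 2 \<le> p x"
    and l: "0 < l" and md: "(\<integral>\<^sup>+x. ennreal ((norm (gfun chi p uhat j x)/l) powr p x) \<partial>lborel) \<le> 1"
    and e: "0 \<le> e" and f: "\<And>x. norm (f x) \<le> e * norm (complex_of_real (phi_j chi j x) * uhat x)"
  shows "(\<integral>\<^sup>+x. ennreal (norm (f x) powr 2) \<partial>lborel) \<le> ennreal (e^2 * 2 powr real_of_int j * l^2 * Kc)"
proof -
  let ?J = "real_of_int j"
  let ?C = "e^2 * 2 powr ?J * l^2"
  let ?D = "2 powr (-3 * ?J)"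
  let ?R = "8/3 * 2 powr ?J"
  let ?H = "\<lambda>x. (norm (gfun chi p uhat j x) / l) powr p x"
  let ?B = "\<lambda>x::real^3. indicator (ball 0 ?R) x :: real"
  have Cnn: "0 \<le> ?C" using e by simp
  have [measurable]: "phi_j chi j \<in> borel_measurable borel" by (rule phi_j_meas[OF chi])
  have [measurable]: "p \<in> borel_measurable borel" "uhat \<in> borel_measurable borel" using pm um by auto
  have Hm: "(\<lambda>x. ennreal (?H x)) \<in> borel_measurable lborel"
    unfolding gfun_def by measurable
  have "ball 0 ?R \<in> sets borel" by simp
  then have "(\<lambda>x. ?B x) \<in> borel_measurable borel" by (rule borel_measurable_indicator)
  then have Bm0: "(\<lambda>x. ?D * ?B x) \<in> borel_measurable borel" by (rule borel_measurable_times[OF borel_measurable_const])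
  have Bm: "(\<lambda>x. ennreal (?D * ?B x)) \<in> borel_measurable lborel"
    apply (rule measurable_compose[OF _ measurable_ennreal])
    unfolding measurable_lborel2 by (rule Bm0)
  have "(\<integral>\<^sup>+x. ennreal (norm (f x) powr 2) \<partial>lborel) \<le> (\<integral>\<^sup>+x. ennreal (?C * (?H x + ?D * ?B x)) \<partial>lborel)"
  proof (rule nn_integral_mono_AE)
    show "AE x in lborel. ennreal (norm (f x) powr 2) \<le> ennreal (?C * (?H x + ?D * ?B x))"
      using p2
    proof eventually_elim
      case (elim x)
      have px: "2 \<le> p x" using elim by simp
      show ?case by (rule ennreal_leI[OF pt_bound[where p=p and x=x and uhat=uhat and j=j, OF chi px l e f[of x]]])
    qed
  qed
  also have "\<dots> = ennreal ?C * ((\<integral>\<^sup>+x. ennreal (?H x) \<partial>lborel) + (\<integral>\<^sup>+x. ennreal (?D * ?B x) \<partial>lborel))"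
  proof -
    have "(\<integral>\<^sup>+x. ennreal (?C * (?H x + ?D * ?B x)) \<partial>lborel) = (\<integral>\<^sup>+x. ennreal ?C * (ennreal (?H x) + ennreal (?D * ?B x)) \<partial>lborel)"
      by (intro nn_integral_cong) (simp add: ennreal_mult Cnn ennreal_plus)
    also have "\<dots> = ennreal ?C * (\<integral>\<^sup>+x. (ennreal (?H x) + ennreal (?D * ?B x)) \<partial>lborel)"
      by (rule nn_integral_cmult[OF borel_measurable_add[OF Hm Bm]])
    also have "(\<integral>\<^sup>+x. (ennreal (?H x) + ennreal (?D * ?B x)) \<partial>lborel) = (\<integral>\<^sup>+x. ennreal (?H x) \<partial>lborel) + (\<integral>\<^sup>+x. ennreal (?D * ?B x) \<partial>lborel)"
      by (rule nn_integral_add[OF Hm Bm])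
    finally show ?thesis .
  qed
  also have "(\<integral>\<^sup>+x. ennreal (?D * ?B x) \<partial>lborel) = ennreal (unit_ball_vol 3 * (8/3)^3)"
  proof -
    have "(\<integral>\<^sup>+x. ennreal (?D * ?B x) \<partial>lborel) = (\<integral>\<^sup>+x. ennreal ?D * indicator (ball (0::real^3) ?R) x \<partial>lborel)"
    proof (rule nn_integral_cong)
      fix x :: "real^3"
      show "ennreal (?D * ?B x) = ennreal ?D * indicator (ball 0 ?R) x"
        by (simp add: indicator_def)
    qed
    also have "\<dots> = ennreal ?D * emeasure lborel (ball (0::real^3) ?R)"
      by (simp add: nn_integral_cmult_indicator)
    also have "emeasure lborel (ball (0::real^3) ?R) = ennreal (unit_ball_vol 3 * ?R ^ 3)"
      by (simp add: emeasure_ball)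
    also have "ennreal ?D * ennreal (unit_ball_vol 3 * ?R ^ 3) = ennreal (?D * (unit_ball_vol 3 * ?R ^ 3))"
      by (simp add: ennreal_mult)
    also have "?D * (unit_ball_vol 3 * ?R ^ 3) = unit_ball_vol 3 * (8/3)^3 * (2 powr (-3 * ?J) * (2 powr ?J)^3)"
      by (simp only: power_mult_distrib mult_ac)
    also have "2 powr (-3 * ?J) * (2 powr ?J)^3 = 1"
      by (simp add: powr_realpow[symmetric] powr_powr powr_add[symmetric] powr_numeral[symmetric])
    finally show ?thesis by simp
  qed
  also have "ennreal ?C * ((\<integral>\<^sup>+x. ennreal (?H x) \<partial>lborel) + ennreal (unit_ball_vol 3 * (8/3)^3))
      \<le> ennreal ?C * (1 + ennreal (unit_ball_vol 3 * (8/3)^3))"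
    using md by (intro mult_left_mono add_right_mono) auto
  also have "\<dots> = ennreal (?C * Kc)"
    unfolding Kc_def using Cnn by (simp add: ennreal_mult ennreal_plus)
  finally show ?thesis by simp
qed

lemma lp_bound:
  assumes chi: "admissible_chi chi" and pm: "p \<in> borel_measurable borel" and um: "uhat \<in> borel_measurable borel"
    and p2: "AE x in lborel. 2 \<le> p x" and p0: "\<forall>x. 0 \<le> p x"
    and fin: "vlp_norm p (gfun chi p uhat j) = ennreal a" and a: "0 \<le> a"
    and e: "0 \<le> e" and f: "\<And>x. norm (f x) \<le> e * norm (complex_of_real (phi_j chi j x) * uhat x)"
  shows "lp_norm 2 f \<le> ennreal ((e * sqrt Kc * 2 powr (real_of_int j / 2)) * a)"
proof (rule eps_le)
  show "0 \<le> e * sqrt Kc * 2 powr (real_of_int j / 2)" using e Kc_pos by simp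
  show "0 \<le> a" by (rule a)
  fix l assume al: "a < l"
  then have l: "0 < l" using a by simp
  have "vlp_norm p (gfun chi p uhat j) < ennreal l" using fin al a by (simp add: ennreal_less_iff)
  then have md: "(\<integral>\<^sup>+x. ennreal ((norm (gfun chi p uhat j x)/l) powr p x) \<partial>lborel) \<le> 1"
    using vlp_mem l p0 by blast
  have I: "(\<integral>\<^sup>+x. ennreal (norm (f x) powr 2) \<partial>lborel) \<le> ennreal (e^2 * 2 powr real_of_int j * l^2 * Kc)"
    by (rule L2_key[OF chi pm um p2 l md e f])
  have "lp_norm 2 f \<le> ennreal ((e^2 * 2 powr real_of_int j * l^2 * Kc) powr (1/2))"
    unfolding lp_norm_def using I e Kc_pos by (intro epowr_le) auto
  also have "(e^2 * 2 powr real_of_int j * l^2 * Kc) powr (1/2) = e * sqrt Kc * 2 powr (real_of_int j / 2) * l"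
  proof -
    have "(e^2 * 2 powr real_of_int j * l^2 * Kc) powr (1/2) = sqrt (e^2 * 2 powr real_of_int j * l^2 * Kc)"
      using Kc_pos by (intro powr_half_sqrt) auto
    also have "\<dots> = e * sqrt (2 powr real_of_int j) * l * sqrt Kc"
      using e l by (simp add: real_sqrt_mult)
    also have "sqrt (2 powr real_of_int j) = 2 powr (real_of_int j / 2)"
      by (simp add: powr_half_sqrt_powr)
    finally show ?thesis by (simp add: algebra_simps)
  qed
  finally show "lp_norm 2 f \<le> ennreal (e * sqrt Kc * 2 powr (real_of_int j / 2) * l)" .
qed

lemma heat_pt:
  assumes chi: "admissible_chi chi" and t: "0 \<le> t"
  shows "norm (complex_of_real (phi_j chi j x) * heat_hat uhat t x)
     \<le> exp (- (9/16 * (2 powr real_of_int j)^2) * t) * norm (complex_of_real (phi_j chi j x) * uhat x)"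
proof (cases "phi_j chi j x = 0")
  case True then show ?thesis by simp
next
  case False
  have "3/4 * 2 powr real_of_int j < norm x" by (rule phi_j_supp(1)[OF chi False])
  have h0: "0 \<le> 3/4 * 2 powr real_of_int j" by simp
  then have "(3/4 * 2 powr real_of_int j)^2 \<le> (norm x)^2"
    using power_mono[OF less_imp_le[OF \<open>3/4 * 2 powr real_of_int j < norm x\<close>] h0, of 2] by simp
  moreover have "(3/4 * 2 powr real_of_int j)^2 = 9/16 * (2 powr real_of_int j)^2" by (simp add: power2_eq_square)
  ultimately have "9/16 * (2 powr real_of_int j)^2 \<le> (norm x)^2" by (simp only:)
  then have "- t * (norm x)^2 \<le> - (9/16 * (2 powr real_of_int j)^2) * t"
    using t by (simp add: mult_left_mono algebra_simps)
  then have ex: "exp (- t * (norm x)^2) \<le> exp (- (9/16 * (2 powr real_of_int j)^2) * t)" by simp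
  have "norm (complex_of_real (phi_j chi j x) * heat_hat uhat t x)
      = exp (- t * (norm x)^2) * norm (complex_of_real (phi_j chi j x) * uhat x)"
    unfolding heat_hat_def by (simp add: norm_mult)
  also have "\<dots> \<le> exp (- (9/16 * (2 powr real_of_int j)^2) * t) * norm (complex_of_real (phi_j chi j x) * uhat x)"
    using ex by (intro mult_right_mono) auto
  finally show ?thesis .
qed

lemma heat_var_pt:
  assumes chi: "admissible_chi chi" and t: "0 \<le> t"
  shows "norm (complex_of_real (2 powr (real_of_int j * (1 - 3 / p x + c)) * phi_j chi j x) * heat_hat uhat t x)
     \<le> (2 powr (real_of_int j * c) * exp (- (9/16 * (2 powr real_of_int j)^2) * t)) * norm (gfun chi p uhat j x)"
proof -
  let ?a = "2 powr (real_of_int j * (1 - 3 / p x))"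
  let ?b = "2 powr (real_of_int j * c)"
  have ab: "2 powr (real_of_int j * (1 - 3 / p x + c)) = ?a * ?b"
    by (simp add: powr_add[symmetric] algebra_simps)
  have "norm (complex_of_real (2 powr (real_of_int j * (1 - 3 / p x + c)) * phi_j chi j x) * heat_hat uhat t x)
     = ?a * ?b * norm (complex_of_real (phi_j chi j x) * heat_hat uhat t x)"
    unfolding ab by (simp add: norm_mult abs_mult)
  also have "\<dots> \<le> ?a * ?b * (exp (- (9/16 * (2 powr real_of_int j)^2) * t) * norm (complex_of_real (phi_j chi j x) * uhat x))"
    by (intro mult_left_mono heat_pt[OF chi t]) auto
  also have "\<dots> = (?b * exp (- (9/16 * (2 powr real_of_int j)^2) * t)) * norm (gfun chi p uhat j x)"
    unfolding gfun_def by (simp add: norm_mult abs_mult)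
  finally show ?thesis .
qed

lemma vlp_mono:
  assumes k: "0 < k" and p0: "\<forall>x. 0 \<le> p x" and fg: "\<And>x. norm (f x) \<le> k * norm (g x)"
  shows "vlp_norm p f \<le> ennreal k * vlp_norm p g"
proof (cases "vlp_norm p g")
  case top then show ?thesis using k by (simp add: ennreal_mult_top)
next
  case (real a)
  have "vlp_norm p f \<le> ennreal (k * a)"
  proof (rule eps_le)
    show "0 \<le> k" "0 \<le> a" using k real by auto
    fix l assume al: "a < l"
    then have l: "0 < l" using real by simp
    have "vlp_norm p g < ennreal l" using real al by (simp add: ennreal_less_iff)
    then have md: "(\<integral>\<^sup>+x. ennreal ((norm (g x)/l) powr p x) \<partial>lborel) \<le> 1"
      using vlp_mem l p0 by blast
    have "(\<integral>\<^sup>+x. ennreal ((norm (f x)/(k*l)) powr p x) \<partial>lborel) \<le> (\<integral>\<^sup>+x. ennreal ((norm (g x)/l) powr p x) \<partial>lborel)"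
    proof (intro nn_integral_mono ennreal_leI powr_mono2)
      fix x
      show "0 \<le> p x" using p0 by auto
      show "0 \<le> norm (f x) / (k*l)" using k l by simp
      show "norm (f x) / (k*l) \<le> norm (g x) / l" using fg[of x] k l by (simp add: field_simps)
    qed
    then show "vlp_norm p f \<le> ennreal (k * l)"
      using md k l by (intro vlp_le) auto
  qed
  then show ?thesis using real k by (simp add: ennreal_mult)
qed

lemma ens_summable: "(f::'a \<Rightarrow> ennreal) summable_on S"
  using nonneg_summable_on_complete[of S f] by simp

lemma sum_bound:
  fixes b G :: "int \<Rightarrow> ennreal"
  assumes "\<And>j. b j \<le> ennreal K * G j" "0 \<le> K" "K \<le> C"
  shows "infsum b UNIV \<le> ennreal C * infsum G UNIV"
proof -
  have "infsum b UNIV \<le> infsum (\<lambda>j. ennreal K * G j) UNIV"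
    using assms by (intro infsum_mono ens_summable) auto
  also have "\<dots> \<le> ennreal K * infsum G UNIV"
  proof (rule infsum_le_finite_sums[OF ens_summable])
    fix F :: "int set" assume F: "finite F" "F \<subseteq> UNIV"
    have "sum G F = infsum G F" using F by simp
    also have "\<dots> \<le> infsum G UNIV" by (intro infsum_mono_neutral ens_summable) auto
    finally have "sum G F \<le> infsum G UNIV" .
    then show "(\<Sum>j\<in>F. ennreal K * G j) \<le> ennreal K * infsum G UNIV"
      by (simp add: sum_distrib_left[symmetric] mult_left_mono)
  qed
  also have "\<dots> \<le> ennreal C * infsum G UNIV"
    using assms by (intro mult_right_mono ennreal_leI) auto
  finally show ?thesis .
qed

lemma term_le_sum:
  fixes G :: "int \<Rightarrow> ennreal"
  shows "G j \<le> infsum G UNIV"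
proof -
  have "infsum G {j} \<le> infsum G UNIV"
    by (intro infsum_mono_neutral ens_summable) auto
  then show ?thesis by simp
qed

theorem lemma5p1:
  fixes chi :: "real^3 \<Rightarrow> real" and p :: "real^3 \<Rightarrow> real" and rho :: ennreal
  assumes "admissible_chi chi"
    and "P0_log p"
    and "AE x in lborel. 2 \<le> p x \<and> p x \<le> 6"
    and "1 \<le> rho"
  shows "\<exists>C>0. \<forall>uhat :: real^3 \<Rightarrow> complex.
           uhat \<in> borel_measurable lborel \<longrightarrow>
           FB_var_norm chi (\<lambda>xi. 1 - 3 / p xi) p uhat < \<infinity> \<longrightarrow>
           Y_norm chi rho p (heat_hat uhat) \<le> ennreal C * FB_var_norm chi (\<lambda>xi. 1 - 3 / p xi) p uhat"
proof -
  have chi: "admissible_chi chi" by (rule assms(1))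
  from assms(2) have pm: "p \<in> borel_measurable borel" and p1: "\<forall>x. 1 \<le> p x"
    unfolding P0_log_def by auto
  have p0: "\<forall>x. 0 \<le> p x" using p1 by (auto intro: order_trans[OF zero_le_one])
  have p2: "AE x in lborel. 2 \<le> p x" using assms(3) by eventually_elim auto
  define r where "r = enn2real rho"
  have rfin: "rho = ennreal r \<and> 1 \<le> r" if "rho \<noteq> \<infinity>"
  proof
    have "rho < top" using that by (simp add: less_top[symmetric])
    then show "rho = ennreal r" unfolding r_def by simp
    have "enn2real 1 \<le> enn2real rho" using assms(4) that by (intro enn2real_mono) (auto simp: top_unique less_top)
    then show "1 \<le> r" unfolding r_def by simp
  qed
  define C1 where "C1 = (if rho = \<infinity> then 1 else 1 / (r * (9/16)) powr (1/r))"
  have C1pos: "0 < C1" unfolding C1_def using rfin by auto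
  define C where "C = max C1 (max (16/9 * sqrt Kc) (sqrt Kc))"
  have Cpos: "0 < C" unfolding C_def using C1pos by simp
  show ?thesis
  proof (intro exI[of _ C] conjI allI impI)
    show "0 < C" by (rule Cpos)
    fix uhat :: "real^3 \<Rightarrow> complex"
    assume um0: "uhat \<in> borel_measurable lborel"
      and finFB: "FB_var_norm chi (\<lambda>xi. 1 - 3 / p xi) p uhat < \<infinity>"
    have um: "uhat \<in> borel_measurable borel" using um0 by simp
    define G where "G = (\<lambda>j. vlp_norm p (gfun chi p uhat j))"
    have FB: "FB_var_norm chi (\<lambda>xi. 1 - 3 / p xi) p uhat = infsum G UNIV"
      unfolding FB_var_norm_def G_def gfun_def[abs_def] by simp
    define a where "a = (\<lambda>j. enn2real (G j))"
    have Ga: "G j = ennreal (a j)" for j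
    proof -
      have "G j \<le> infsum G UNIV" by (rule term_le_sum)
      then have "G j < top" using finFB FB by simp
      then show ?thesis unfolding a_def by simp
    qed
    have a0: "0 \<le> a j" for j unfolding a_def by simp
    have fin: "vlp_norm p (gfun chi p uhat j) = ennreal (a j)" for j using Ga unfolding G_def .
    let ?F = "heat_hat uhat"
    have c1: "LFB_var_norm chi rho (\<lambda>xi. 1 - 3 / p xi + (if rho = \<infinity> then 0 else 2 / enn2real rho)) p ?F
        \<le> ennreal C * infsum G UNIV"
      unfolding LFB_var_norm_def
    proof (rule sum_bound[where K=C1])
      fix j
      let ?b = "9/16 * (2 powr real_of_int j)^2"
      have bpos: "0 < ?b" by simp
      show "time_norm rho (\<lambda>t. vlp_norm p (\<lambda>xi. complex_of_real (2 powr (real_of_int j * (1 - 3 / p xi + (if rho = \<infinity> then 0 else 2 / enn2real rho))) * phi_j chi j xi) * ?F t xi))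
          \<le> ennreal C1 * G j"
      proof (cases "rho = \<infinity>")
        case True
        have "time_norm \<infinity> (\<lambda>t. vlp_norm p (\<lambda>xi. complex_of_real (2 powr (real_of_int j * (1 - 3 / p xi + 0)) * phi_j chi j xi) * ?F t xi)) \<le> ennreal (a j)"
        proof (rule time_inf)
          fix t :: real assume t: "0 < t"
          have "vlp_norm p (\<lambda>xi. complex_of_real (2 powr (real_of_int j * (1 - 3 / p xi + 0)) * phi_j chi j xi) * ?F t xi) \<le> ennreal 1 * G j"
            unfolding G_def
          proof (rule vlp_mono)
            show "(0::real) < 1" by simp
            show "\<forall>x. 0 \<le> p x" by (rule p0)
            fix x
            have "norm (complex_of_real (2 powr (real_of_int j * (1 - 3 / p x + 0)) * phi_j chi j x) * ?F t x)
                \<le> (2 powr (real_of_int j * 0) * exp (- ?b * t)) * norm (gfun chi p uhat j x)"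
              using t by (intro heat_var_pt[OF chi]) auto
            also have "\<dots> \<le> 1 * norm (gfun chi p uhat j x)"
              using t bpos by (intro mult_right_mono) auto
            finally show "norm (complex_of_real (2 powr (real_of_int j * (1 - 3 / p x + 0)) * phi_j chi j x) * ?F t x) \<le> 1 * norm (gfun chi p uhat j x)" .
          qed
          then show "vlp_norm p (\<lambda>xi. complex_of_real (2 powr (real_of_int j * (1 - 3 / p xi + 0)) * phi_j chi j xi) * ?F t xi) \<le> ennreal (a j)"
            using Ga by simp
        qed
        then show ?thesis using True Ga unfolding C1_def by simp
      next
        case False
        then have rr: "rho = ennreal r" "1 \<le> r" using rfin by auto
        let ?A = "2 powr (real_of_int j * (2/r)) * a j"
        have tn: "time_norm (ennreal r) (\<lambda>t. vlp_norm p (\<lambda>xi. complex_of_real (2 powr (real_of_int j * (1 - 3 / p xi + 2/r)) * phi_j chi j xi) * ?F t xi))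
            \<le> ennreal (?A / (r * ?b) powr (1/r))"
        proof (rule time_fin)
          show "1 \<le> r" by (rule rr(2))
          show "0 < ?b" by (rule bpos)
          show "0 \<le> ?A" using a0 by simp
          fix t :: real assume t: "0 < t"
          have "vlp_norm p (\<lambda>xi. complex_of_real (2 powr (real_of_int j * (1 - 3 / p xi + 2/r)) * phi_j chi j xi) * ?F t xi)
              \<le> ennreal (2 powr (real_of_int j * (2/r)) * exp (- ?b * t)) * G j"
            unfolding G_def
          proof (rule vlp_mono)
            show "0 < 2 powr (real_of_int j * (2/r)) * exp (- ?b * t)" by simp
            show "\<forall>x. 0 \<le> p x" by (rule p0)
            fix x
            show "norm (complex_of_real (2 powr (real_of_int j * (1 - 3 / p x + 2/r)) * phi_j chi j x) * ?F t x)
                \<le> (2 powr (real_of_int j * (2/r)) * exp (- ?b * t)) * norm (gfun chi p uhat j x)"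
              using t by (intro heat_var_pt[OF chi]) auto
          qed
          also have "\<dots> = ennreal (?A * exp (- ?b * t))"
            using Ga a0 by (simp add: ennreal_mult[symmetric] algebra_simps)
          finally show "vlp_norm p (\<lambda>xi. complex_of_real (2 powr (real_of_int j * (1 - 3 / p xi + 2/r)) * phi_j chi j xi) * ?F t xi)
              \<le> ennreal (?A * exp (- ?b * t))" .
        qed
        have eq: "?A / (r * ?b) powr (1/r) = C1 * a j"
        proof -
          have sq: "(2 powr real_of_int j)^2 = 2 powr (2 * real_of_int j)"
            by (simp add: power2_eq_square powr_add[symmetric])
          have "(r * ?b) powr (1/r) = (r * (9/16)) powr (1/r) * ((2 powr real_of_int j)^2) powr (1/r)"
            using rr by (simp add: powr_mult[symmetric] algebra_simps)
          also have "((2 powr real_of_int j)^2) powr (1/r) = 2 powr (real_of_int j * (2/r))"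
          proof -
            have eqx: "2 * real_of_int j * (1/r) = real_of_int j * (2/r)" by simp
            show ?thesis unfolding sq powr_powr eqx by (rule refl)
          qed
          finally have "(r * ?b) powr (1/r) = (r * (9/16)) powr (1/r) * 2 powr (real_of_int j * (2/r))" .
          then show ?thesis unfolding C1_def using False by simp
        qed
        have c1nn: "0 \<le> C1" using C1pos by simp
        show ?thesis using tn False rr eq Ga c1nn unfolding r_def[symmetric] by (simp add: ennreal_mult a0)
      qed
    next
      show "0 \<le> C1" using C1pos by simp
      show "C1 \<le> C" unfolding C_def by simp
    qed
    have c2: "LFB_norm chi 1 (3/2) 2 ?F \<le> ennreal C * infsum G UNIV"
      unfolding LFB_norm_def
    proof (rule sum_bound[where K="16/9 * sqrt Kc"])
      fix j
      let ?b = "9/16 * (2 powr real_of_int j)^2"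
      have bpos: "0 < ?b" by simp
      let ?A = "sqrt Kc * 2 powr (real_of_int j / 2) * a j"
      have tn: "time_norm (ennreal 1) (\<lambda>t. lp_norm 2 (\<lambda>xi. complex_of_real (phi_j chi j xi) * ?F t xi))
          \<le> ennreal (?A / (1 * ?b) powr (1/1))"
      proof (rule time_fin)
        show "0 \<le> ?A" using a0 Kc_pos by simp
        fix t :: real assume t: "0 < t"
        have "lp_norm 2 (\<lambda>xi. complex_of_real (phi_j chi j xi) * ?F t xi)
            \<le> ennreal ((exp (- ?b * t) * sqrt Kc * 2 powr (real_of_int j / 2)) * a j)"
          using t by (intro lp_bound[OF chi pm um p2 p0 fin a0] heat_pt[OF chi]) auto
        also have "(exp (- ?b * t) * sqrt Kc * 2 powr (real_of_int j / 2)) * a j = ?A * exp (- ?b * t)"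
          by (simp add: algebra_simps)
        finally show "lp_norm 2 (\<lambda>xi. complex_of_real (phi_j chi j xi) * ?F t xi) \<le> ennreal (?A * exp (- ?b * t))" .
      qed auto
      have eq: "2 powr (real_of_int j * (3/2)) * (?A / (1 * ?b) powr (1/1)) = 16/9 * sqrt Kc * a j"
      proof -
        have "2 powr (real_of_int j * (3/2)) * 2 powr (real_of_int j / 2) = (2 powr real_of_int j)^2"
          by (simp add: power2_eq_square powr_add[symmetric] algebra_simps)
        then show ?thesis by (simp add: field_simps)
      qed
      have "ennreal (2 powr (real_of_int j * (3/2))) * time_norm 1 (\<lambda>t. lp_norm 2 (\<lambda>xi. complex_of_real (phi_j chi j xi) * ?F t xi))
          \<le> ennreal (2 powr (real_of_int j * (3/2))) * ennreal (?A / (1 * ?b) powr (1/1))"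
        using tn by (intro mult_left_mono) auto
      also have "\<dots> = ennreal (16/9 * sqrt Kc) * G j"
        using eq Ga a0 Kc_pos by (simp add: ennreal_mult[symmetric])
      finally show "ennreal (2 powr (real_of_int j * (3/2))) * time_norm 1 (\<lambda>t. lp_norm 2 (\<lambda>xi. complex_of_real (phi_j chi j xi) * ?F t xi))
          \<le> ennreal (16/9 * sqrt Kc) * G j" .
    next
      show "0 \<le> 16/9 * sqrt Kc" using Kc_pos by simp
      show "16/9 * sqrt Kc \<le> C" unfolding C_def by simp
    qed
    have c3: "LFB_norm chi \<infinity> (-1/2) 2 ?F \<le> ennreal C * infsum G UNIV"
      unfolding LFB_norm_def
    proof (rule sum_bound[where K="sqrt Kc"])
      fix j
      let ?b = "9/16 * (2 powr real_of_int j)^2"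
      have bpos: "0 < ?b" by simp
      let ?A = "sqrt Kc * 2 powr (real_of_int j / 2) * a j"
      have tn: "time_norm \<infinity> (\<lambda>t. lp_norm 2 (\<lambda>xi. complex_of_real (phi_j chi j xi) * ?F t xi)) \<le> ennreal ?A"
      proof (rule time_inf)
        fix t :: real assume t: "0 < t"
        have "lp_norm 2 (\<lambda>xi. complex_of_real (phi_j chi j xi) * ?F t xi)
            \<le> ennreal ((1 * sqrt Kc * 2 powr (real_of_int j / 2)) * a j)"
        proof (intro lp_bound[OF chi pm um p2 p0 fin a0])
          fix x
          have "norm (complex_of_real (phi_j chi j x) * ?F t x) \<le> exp (- ?b * t) * norm (complex_of_real (phi_j chi j x) * uhat x)"
            using t by (intro heat_pt[OF chi]) auto
          also have "\<dots> \<le> 1 * norm (complex_of_real (phi_j chi j x) * uhat x)"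
            using t bpos by (intro mult_right_mono) auto
          finally show "norm (complex_of_real (phi_j chi j x) * ?F t x) \<le> 1 * norm (complex_of_real (phi_j chi j x) * uhat x)" .
        qed auto
        then show "lp_norm 2 (\<lambda>xi. complex_of_real (phi_j chi j xi) * ?F t xi) \<le> ennreal ?A" by simp
      qed
      have eq: "2 powr (real_of_int j * (-1/2)) * ?A = sqrt Kc * a j"
      proof -
        have "2 powr (real_of_int j * (-1/2)) * 2 powr (real_of_int j / 2) = 1"
          by (simp add: powr_add[symmetric])
        then show ?thesis by (simp add: algebra_simps)
      qed
      have "ennreal (2 powr (real_of_int j * (-1/2))) * time_norm \<infinity> (\<lambda>t. lp_norm 2 (\<lambda>xi. complex_of_real (phi_j chi j xi) * ?F t xi))
          \<le> ennreal (2 powr (real_of_int j * (-1/2))) * ennreal ?A"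
        using tn by (intro mult_left_mono) auto
      also have "\<dots> = ennreal (sqrt Kc) * G j"
        using eq Ga a0 Kc_pos by (simp add: ennreal_mult[symmetric])
      finally show "ennreal (2 powr (real_of_int j * (-1/2))) * time_norm \<infinity> (\<lambda>t. lp_norm 2 (\<lambda>xi. complex_of_real (phi_j chi j xi) * ?F t xi))
          \<le> ennreal (sqrt Kc) * G j" .
    next
      show "0 \<le> sqrt Kc" using Kc_pos by simp
      show "sqrt Kc \<le> C" unfolding C_def by simp
    qed
    show "Y_norm chi rho p ?F \<le> ennreal C * FB_var_norm chi (\<lambda>xi. 1 - 3 / p xi) p uhat"
      unfolding Y_norm_def FB using c1 c2 c3 by simp
  qed
qed

end
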